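(* Let $\Delta\ge 3$ be an integer and let $G\in\mathcal{G}_\Delta$. Let $c_1,\dots,c_\Delta$ be the real numbers defined by $c_\Delta=\frac{1}{\Delta}$ and $ic_i+c_{i+1}=1$ for $i=1,\dots,\Delta-1$. Then $$\alpha(G)\ge \sum_{i=1}^{\Delta} c_i|V_i(G)|.$$
   Context: All graphs are simple, finite and undirected. For an integer $\Delta\ge 3$, $\mathcal{G}_\Delta$ denotes the set of connected graphs $G\neq K_{\Delta+1}$ with maximum degree $\Delta$. For a graph $G$ and $i\ge 1$, $V_i(G)$ is the set of vertices of $G$ of degree $i$. $\alpha(G)$ is the independence number of $G$. *)

theory Defs
  imports Main "HOL-Library.Disjoint_Sets" Complex_Main
begin

definition simple_graph :: "'a set \<Rightarrow> ('a \<Rightarrow> 'a \<Rightarrow> bool) \<Rightarrow> bool" where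
  "simple_graph V E \<longleftrightarrow> finite V \<and>
     (\<forall>u v. E u v \<longrightarrow> u \<in> V \<and> v \<in> V) \<and>
     (\<forall>u v. E u v \<longrightarrow> E v u) \<and> (\<forall>v. \<not> E v v)"

definition neighbours :: "'a set \<Rightarrow> ('a \<Rightarrow> 'a \<Rightarrow> bool) \<Rightarrow> 'a \<Rightarrow> 'a set" where
  "neighbours V E v = {u \<in> V. E v u}"

definition degree :: "'a set \<Rightarrow> ('a \<Rightarrow> 'a \<Rightarrow> bool) \<Rightarrow> 'a \<Rightarrow> nat" where
  "degree V E v = card (neighbours V E v)"

definition max_degree :: "'a set \<Rightarrow> ('a \<Rightarrow> 'a \<Rightarrow> bool) \<Rightarrow> nat" where
  "max_degree V E = Max (insert 0 (degree V E ` V))"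

definition deg_class :: "'a set \<Rightarrow> ('a \<Rightarrow> 'a \<Rightarrow> bool) \<Rightarrow> nat \<Rightarrow> 'a set" where
  "deg_class V E i = {v \<in> V. degree V E v = i}"

definition connected_graph :: "'a set \<Rightarrow> ('a \<Rightarrow> 'a \<Rightarrow> bool) \<Rightarrow> bool" where
  "connected_graph V E \<longleftrightarrow> V \<noteq> {} \<and> (\<forall>u\<in>V. \<forall>v\<in>V. E\<^sup>*\<^sup>* u v)"

definition is_complete_graph :: "'a set \<Rightarrow> ('a \<Rightarrow> 'a \<Rightarrow> bool) \<Rightarrow> nat \<Rightarrow> bool" where
  "is_complete_graph V E n \<longleftrightarrow> card V = n \<and> (\<forall>u\<in>V. \<forall>v\<in>V. u \<noteq> v \<longrightarrow> E u v)"

definition independent_set :: "'a set \<Rightarrow> ('a \<Rightarrow> 'a \<Rightarrow> bool) \<Rightarrow> 'a set \<Rightarrow> bool" where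
  "independent_set V E S \<longleftrightarrow> S \<subseteq> V \<and> (\<forall>u\<in>S. \<forall>v\<in>S. \<not> E u v)"

definition independence_number :: "'a set \<Rightarrow> ('a \<Rightarrow> 'a \<Rightarrow> bool) \<Rightarrow> nat" where
  "independence_number V E = Max (card ` {S. independent_set V E S})"

definition in_G_Delta :: "nat \<Rightarrow> 'a set \<Rightarrow> ('a \<Rightarrow> 'a \<Rightarrow> bool) \<Rightarrow> bool" where
  "in_G_Delta \<Delta> V E \<longleftrightarrow> simple_graph V E \<and> connected_graph V E \<and>
     max_degree V E = \<Delta> \<and> \<not> is_complete_graph V E (\<Delta> + 1)"

end

theory Submission
  imports Defs
begin

locale ctx =
  fixes E :: "'a \<Rightarrow> 'a \<Rightarrow> bool" and D :: nat and c :: "nat \<Rightarrow> real"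
  assumes Esym: "E u v \<Longrightarrow> E v u" and Eirr: "\<not> E v v" and D3: "3 \<le> D"
    and cD: "c D = 1 / real D"
    and crec: "1 \<le> i \<Longrightarrow> i \<le> D - 1 \<Longrightarrow> real i * c i + c (i+1) = 1"
begin

lemma c_bounds_aux: "\<forall>i. D - i = k \<longrightarrow> 1 \<le> i \<longrightarrow> i \<le> D \<longrightarrow> 1/real(i+1) \<le> c i \<and> c i \<le> 1/real i"
proof (induction k)
  case 0
  then show ?case using cD by (auto simp: field_simps)
next
  case (Suc k)
  show ?case
  proof (intro allI impI)
    fix i assume a: "D - i = Suc k" "1 \<le> i" "i \<le> D"
    have ih: "1/real(i+2) \<le> c (i+1) \<and> c (i+1) \<le> 1/real (i+1)"
      using Suc.IH[rule_format, of "i+1"] a by auto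
    have r: "real i * c i + c (i+1) = 1" using crec[of i] a by auto
    have ip: "real i \<ge> 1" using a by auto
    have ci: "c i = (1 - c (i+1)) / real i" using r ip by (auto simp: field_simps)
    have l: "1/real(i+1) \<le> c i"
    proof -
      have "1 - c (i+1) \<ge> 1 - 1/real(i+1)" using ih by auto
      also have "1 - 1/real(i+1) = real i / real (i+1)" by (auto simp: field_simps)
      finally have "real i / real (i+1) \<le> 1 - c (i+1)" .
      then have "real i / real (i+1) / real i \<le> (1 - c (i+1)) / real i"
        by (rule divide_right_mono) (use ip in auto)
      moreover have "real i / real (i+1) / real i = 1 / real (i+1)" using ip by simp
      ultimately show ?thesis using ci by simp
    qed
    have u: "c i \<le> 1 / real i"
    proof -
      have "0 \<le> c (i+1)" using ih by (smt (verit) divide_nonneg_nonneg of_nat_0_le_iff)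
      then have "1 - c (i+1) \<le> 1" by simp
      then show ?thesis using ci ip by (simp add: divide_right_mono)
    qed
    show "1/real(i+1) \<le> c i \<and> c i \<le> 1/real i" using l u by simp
  qed
qed

lemma c_bounds: "1 \<le> i \<Longrightarrow> i \<le> D \<Longrightarrow> 1/real(i+1) \<le> c i \<and> c i \<le> 1/real i"
  using c_bounds_aux by blast

lemma c_step: "1 \<le> i \<Longrightarrow> i + 1 \<le> D \<Longrightarrow> c (i+1) \<le> c i"
proof -
  assume a: "1 \<le> i" "i + 1 \<le> D"
  have "c (i+1) \<le> 1 / real (i+1)" using c_bounds[of "i+1"] a by auto
  also have "\<dots> \<le> c i" using c_bounds[of i] a by auto
  finally show ?thesis .
qed

lemma c_mono_aux: "\<forall>i j. j - i = k \<longrightarrow> 1 \<le> i \<longrightarrow> i \<le> j \<longrightarrow> j \<le> D \<longrightarrow> c j \<le> c i"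
proof (induction k)
  case 0 then show ?case by auto
next
  case (Suc k)
  show ?case
  proof (intro allI impI)
    fix i j assume a: "j - i = Suc k" "1 \<le> i" "i \<le> j" "j \<le> D"
    have "c j \<le> c (i+1)" using Suc.IH[rule_format, of j "i+1"] a by auto
    also have "\<dots> \<le> c i" using c_step[of i] a by auto
    finally show "c j \<le> c i" .
  qed
qed

lemma c_mono: "1 \<le> i \<Longrightarrow> i \<le> j \<Longrightarrow> j \<le> D \<Longrightarrow> c j \<le> c i"
  using c_mono_aux by blast

lemma c_ge: "1 \<le> i \<Longrightarrow> i \<le> D \<Longrightarrow> 1 / real D \<le> c i"
  using c_mono[of i D] cD by auto

lemma c1: "c 1 \<le> 1"
  using c_bounds[of 1] D3 by auto

lemma c_pos: "1 \<le> i \<Longrightarrow> i \<le> D \<Longrightarrow> 0 \<le> c i"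
  using c_ge[of i] by (smt (verit) divide_nonneg_nonneg of_nat_0_le_iff)

lemma c_key: "2 \<le> d \<Longrightarrow> d + 1 \<le> D \<Longrightarrow> real (d+1) * c d \<le> real d * c (d-1)"
proof -
  assume a: "2 \<le> d" "d + 1 \<le> D"
  have lo: "1/real(d+2) \<le> c (d+1)" using c_bounds[of "d+1"] a by auto
  have r1: "real d * c d + c (d+1) = 1" using crec[of d] a by auto
  have r2: "real (d-1) * c (d-1) + c d = 1" using crec[of "d-1"] a by auto
  have dd: "real (d-1) = real d - 1" using a by auto
  have up: "c d * real d \<le> 1 - 1/real(d+2)" using r1 lo by (auto simp: algebra_simps)
  have up2: "c d * (real d * (real d + 2)) \<le> real d + 1"
  proof -
    have "c d * real d * (real d + 2) \<le> (1 - 1/real(d+2)) * (real d + 2)"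
      using up by (intro mult_right_mono) auto
    also have "\<dots> = real d + 1" by (auto simp: field_simps)
    finally show ?thesis by (simp add: algebra_simps)
  qed
  have cdpos: "0 \<le> c d" using c_pos[of d] a by auto
  have "real (d+1) * c d * (real d - 1) \<le> real d * (1 - c d)"
  proof -
    have "(real d + 1) * (real d * real d + real d - 1) \<le> real d * real d * (real d + 2)"
      by (simp add: algebra_simps)
    have "c d * (real d * real d + real d - 1) \<le> real d"
    proof -
      have pp: "(real d * real d + real d - 1) * (real d + 1) \<le> (real d * (real d + 2)) * real d"
        by (simp add: algebra_simps)
      have "c d * ((real d * real d + real d - 1) * (real d + 1)) \<le> c d * ((real d * (real d + 2)) * real d)"
        using pp cdpos by (rule mult_left_mono)
      then have "c d * (real d * real d + real d - 1) * (real d + 1) \<le> c d * (real d * (real d + 2)) * real d"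
        by (simp add: mult.assoc)
      also have "\<dots> \<le> (real d + 1) * real d" using up2 a by (intro mult_right_mono) auto
      finally have "c d * (real d * real d + real d - 1) * (real d + 1) \<le> real d * (real d + 1)"
        by (simp add: algebra_simps)
      then show ?thesis using a by (smt (verit) mult_right_le_imp_le of_nat_0_le_iff)
    qed
    then show ?thesis by (simp add: algebra_simps)
  qed
  moreover have "real d * (real (d-1) * c (d-1)) = real d * (1 - c d)" using r2 by simp
  ultimately have "real (d+1) * c d * real (d-1) \<le> real d * (real (d-1) * c (d-1))"
    using dd by simp
  then have "real (d-1) * (real (d+1) * c d) \<le> real (d-1) * (real d * c (d-1))"
    by (simp add: algebra_simps)
  then show ?thesis using a by (simp add: mult_le_cancel_left)
qed


abbreviation nb where "nb S v \<equiv> neighbours S E v"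
abbreviation dg where "dg S v \<equiv> degree S E v"
abbreviation al where "al S \<equiv> independence_number S E"
definition cn where "cn S v = insert v (nb S v)"
definition cliq where "cliq S v \<longleftrightarrow> (\<forall>z\<in>nb S v. cn S z = cn S v)"
definition wt where "wt S v = (if cliq S v then 1 / real (dg S v + 1) else c (dg S v))"
definition reach where "reach S = (\<lambda>a b. a \<in> S \<and> b \<in> S \<and> E a b)\<^sup>*\<^sup>*"
definition conn where "conn S \<longleftrightarrow> (\<forall>a\<in>S. \<forall>b\<in>S. reach S a b)"
definition sep where "sep X A \<longleftrightarrow> A \<subseteq> X \<and> A \<noteq> {} \<and> X - A \<noteq> {} \<and> (\<forall>s\<in>A. \<forall>t\<in>X-A. \<not> E s t)"

lemma nb_def: "nb S v = {u \<in> S. E v u}" by (simp add: neighbours_def)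
lemma dg_def: "dg S v = card (nb S v)" by (simp add: degree_def)
lemma nb_sub: "nb S v \<subseteq> S" by (auto simp: nb_def)
lemma nb_fin: "finite S \<Longrightarrow> finite (nb S v)" by (auto simp: nb_def)
lemma nb_mono: "T \<subseteq> S \<Longrightarrow> nb T v \<subseteq> nb S v" by (auto simp: nb_def)
lemma dg_mono: "finite S \<Longrightarrow> T \<subseteq> S \<Longrightarrow> dg T v \<le> dg S v"
  unfolding dg_def by (intro card_mono nb_fin) (auto simp: nb_def)
lemma nb_diff: "nb (S - X) v = nb S v - X" by (auto simp: nb_def)
lemma nb_irr: "v \<notin> nb S v" using Eirr by (auto simp: nb_def)
lemma nb_iff: "u \<in> nb S v \<longleftrightarrow> u \<in> S \<and> E v u" by (auto simp: nb_def)
lemma cn_sub: "v \<in> S \<Longrightarrow> cn S v \<subseteq> S" by (auto simp: cn_def nb_def)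
lemma dg_cn: "finite S \<Longrightarrow> card (cn S v) = dg S v + 1"
  by (simp add: cn_def dg_def nb_fin nb_irr)

lemma indep_fin: "finite S \<Longrightarrow> finite {I. independent_set S E I}"
  by (rule finite_subset[of _ "Pow S"]) (auto simp: independent_set_def)

lemma al_ge: "finite S \<Longrightarrow> independent_set S E I \<Longrightarrow> card I \<le> al S"
  unfolding independence_number_def by (rule Max_ge) (auto simp: indep_fin)

lemma al_ex: "finite S \<Longrightarrow> \<exists>I. independent_set S E I \<and> card I = al S"
proof -
  assume f: "finite S"
  have "{} \<in> {I. independent_set S E I}" by (auto simp: independent_set_def)
  then have "al S \<in> card ` {I. independent_set S E I}"
    unfolding independence_number_def using f indep_fin by (intro Max_in) auto
  then show ?thesis by auto
qed

lemma al_mono: "finite S \<Longrightarrow> T \<subseteq> S \<Longrightarrow> al T \<le> al S"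
proof -
  assume a: "finite S" "T \<subseteq> S"
  obtain I where "independent_set T E I" "card I = al T" using al_ex[of T] a finite_subset by blast
  then have "independent_set S E I" using a by (auto simp: independent_set_def)
  then show ?thesis using al_ge a \<open>card I = al T\<close> by metis
qed

lemma al_union: "finite S \<Longrightarrow> finite T \<Longrightarrow> S \<inter> T = {} \<Longrightarrow> (\<forall>a\<in>S. \<forall>b\<in>T. \<not> E a b)
  \<Longrightarrow> al S + al T \<le> al (S \<union> T)"
proof -
  assume a: "finite S" "finite T" "S \<inter> T = {}" "\<forall>a\<in>S. \<forall>b\<in>T. \<not> E a b"
  obtain I where I: "independent_set S E I" "card I = al S" using al_ex a by blast
  obtain J where J: "independent_set T E J" "card J = al T" using al_ex a by blast
  have "independent_set (S \<union> T) E (I \<union> J)"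
    using I J a Esym unfolding independent_set_def by blast
  moreover have "card (I \<union> J) = card I + card J"
    using I J a by (intro card_Un_disjoint) (auto simp: independent_set_def intro: finite_subset)
  ultimately show ?thesis using al_ge[of "S \<union> T" "I \<union> J"] a I J by auto
qed

lemma al_pick: "finite S \<Longrightarrow> v \<in> S \<Longrightarrow> 1 + al (S - cn S v) \<le> al S"
proof -
  assume a: "finite S" "v \<in> S"
  obtain I where I: "independent_set (S - cn S v) E I" "card I = al (S - cn S v)" using al_ex a by blast
  have "independent_set S E (insert v I)"
    using I a Esym Eirr unfolding independent_set_def cn_def nb_def by blast
  moreover have "card (insert v I) = 1 + card I"
    using I a by (subst card_insert_disjoint) (auto simp: independent_set_def cn_def intro: finite_subset)
  ultimately show ?thesis using al_ge[of S "insert v I"] a I by auto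
qed

lemma al_insert: "finite A \<Longrightarrow> x \<notin> A \<Longrightarrow> al (insert x A) \<le> max (al A) (1 + al (A - nb A x))"
proof -
  assume a: "finite A" "x \<notin> A"
  obtain I where I: "independent_set (insert x A) E I" "card I = al (insert x A)" using al_ex a by blast
  show ?thesis
  proof (cases "x \<in> I")
    case False
    then have "independent_set A E I" using I by (auto simp: independent_set_def)
    then show ?thesis using al_ge a I by fastforce
  next
    case True
    then have "independent_set (A - nb A x) E (I - {x})" using I by (auto simp: independent_set_def nb_def)
    then have "card (I - {x}) \<le> al (A - nb A x)" using al_ge a by blast
    moreover have "card I = 1 + card (I - {x})" using True I a
      by (metis add.commute card.remove finite_insert independent_set_def infinite_super plus_1_eq_Suc)
    ultimately show ?thesis using I by auto
  qed
qed

lemma al_pos: "finite S \<Longrightarrow> S \<noteq> {} \<Longrightarrow> 1 \<le> al S"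
proof -
  assume a: "finite S" "S \<noteq> {}"
  then obtain v where "v \<in> S" by auto
  then have "independent_set S E {v}" using Eirr by (auto simp: independent_set_def)
  then show ?thesis using al_ge[OF a(1)] by fastforce
qed


lemma reach_refl: "reach S a a" by (simp add: reach_def)
lemma reach_step: "reach S a b \<Longrightarrow> b \<in> S \<Longrightarrow> d \<in> S \<Longrightarrow> E b d \<Longrightarrow> reach S a d"
  unfolding reach_def by (rule rtranclp.rtrancl_into_rtrancl) auto
lemma reach_edge: "b \<in> S \<Longrightarrow> d \<in> S \<Longrightarrow> E b d \<Longrightarrow> reach S b d"
  using reach_step[OF reach_refl] by blast
lemma reach_trans: "reach S a b \<Longrightarrow> reach S b d \<Longrightarrow> reach S a d"
  unfolding reach_def by (rule rtranclp_trans)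
lemma reach_in: "reach S a b \<Longrightarrow> a \<in> S \<Longrightarrow> b \<in> S"
  unfolding reach_def by (induction rule: rtranclp_induct) auto
lemma reach_sym: "reach S a b \<Longrightarrow> reach S b a"
  unfolding reach_def
proof (induction rule: rtranclp_induct)
  case base then show ?case by simp
next
  case (step y z)
  then have "(\<lambda>a b. a \<in> S \<and> b \<in> S \<and> E a b) z y" using Esym by auto
  from converse_rtranclp_into_rtranclp[OF this step.IH] show ?case .
qed
lemma reach_mono: "S \<subseteq> T \<Longrightarrow> reach S a b \<Longrightarrow> reach T a b"
  unfolding reach_def by (rule rtranclp_mono[THEN predicate2D]) auto

lemma reach_closed: "reach S a b \<Longrightarrow> a \<in> T \<Longrightarrow> (\<forall>s\<in>T. \<forall>t\<in>S-T. \<not> E s t) \<Longrightarrow> b \<in> T"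
  unfolding reach_def by (induction rule: rtranclp_induct) auto

lemma conn_closed: "conn S \<Longrightarrow> T \<subseteq> S \<Longrightarrow> T \<noteq> {} \<Longrightarrow> (\<forall>s\<in>T. \<forall>t\<in>S-T. \<not> E s t) \<Longrightarrow> T = S"
proof -
  assume a: "conn S" "T \<subseteq> S" "T \<noteq> {}" "\<forall>s\<in>T. \<forall>t\<in>S-T. \<not> E s t"
  obtain x where x: "x \<in> T" using a by auto
  show "T = S"
  proof
    show "S \<subseteq> T"
    proof
      fix b assume "b \<in> S"
      then have "reach S x b" using a x conn_def by auto
      then show "b \<in> T" using reach_closed x a by blast
    qed
  qed (use a in auto)
qed

lemma conn_nsep: "conn S \<Longrightarrow> \<not> sep S T"
  unfolding sep_def using conn_closed by blast

lemma comp_closed: "Z = {t. reach X z t} \<Longrightarrow> t \<in> Z \<Longrightarrow> s \<in> X \<Longrightarrow> E t s \<Longrightarrow> z \<in> X \<Longrightarrow> s \<in> Z"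
proof -
  assume a: "Z = {t. reach X z t}" "t \<in> Z" "s \<in> X" "E t s" "z \<in> X"
  have "reach X z t" using a by simp
  moreover have "t \<in> X" using reach_in[OF calculation a(5)] .
  ultimately have "reach X z s" using reach_step a by blast
  then show ?thesis using a by simp
qed

lemma comp_sub: "z \<in> X \<Longrightarrow> {t. reach X z t} \<subseteq> X"
  using reach_in by blast

lemma not_conn: "\<not> conn S \<Longrightarrow> \<exists>A. sep S A"
proof -
  assume "\<not> conn S"
  then obtain a b where ab: "a \<in> S" "b \<in> S" "\<not> reach S a b" unfolding conn_def by auto
  let ?A = "{t. reach S a t}"
  have 1: "?A \<subseteq> S" using comp_sub[of a S] ab by simp
  have 2: "a \<in> ?A" using reach_refl[of S a] by simp
  have 3: "b \<in> S - ?A" using ab by simp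
  have 4: "\<forall>s\<in>?A. \<forall>t\<in>S-?A. \<not> E s t" using comp_closed[of ?A S a] ab(1) by blast
  have "sep S ?A" unfolding sep_def using 1 2 3 4 by blast
  then show ?thesis by blast
qed

lemma conn_via: "(\<forall>z\<in>X. reach X z y) \<Longrightarrow> conn X"
  unfolding conn_def using reach_sym reach_trans by blast

lemma reach_induct[consumes 1, case_names base step]:
  assumes "reach S a b" "P a"
    "\<And>y z. reach S a y \<Longrightarrow> y \<in> S \<Longrightarrow> z \<in> S \<Longrightarrow> E y z \<Longrightarrow> P y \<Longrightarrow> P z"
  shows "P b"
  using assms(1) unfolding reach_def
proof (induction rule: rtranclp_induct)
  case base then show ?case using assms(2) by simp
next
  case (step y z) then show ?case using assms(3)[of y z] unfolding reach_def by blast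
qed

lemma reach_avoid: "reach S v t \<Longrightarrow> v \<in> S - {r} \<Longrightarrow>
   reach (S - {r}) v t \<or> (\<exists>y\<in>S-{r}. E y r \<and> reach (S - {r}) v y)"
proof (induction rule: reach_induct)
  case base then show ?case using reach_refl by blast
next
  case (step y z)
  show ?case
  proof (cases "reach (S - {r}) v y")
    case True
    have yS: "y \<in> S - {r}" using reach_in[OF True] step(6) by blast
    show ?thesis
    proof (cases "z = r")
      case True then show ?thesis using yS step \<open>reach (S - {r}) v y\<close> by blast
    next
      case False
      then have "reach (S - {r}) v z" using reach_step[OF \<open>reach (S - {r}) v y\<close> yS] step by blast
      then show ?thesis by blast
    qed
  next
    case False then show ?thesis using step by blast
  qed
qed

lemma reg_conn: "conn S \<Longrightarrow> (\<forall>a\<in>S. \<forall>b\<in>S. E a b \<longrightarrow> f a = f b) \<Longrightarrow> a \<in> S \<Longrightarrow> b \<in> S \<Longrightarrow> f a = f b"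
proof -
  assume a: "conn S" "\<forall>a\<in>S. \<forall>b\<in>S. E a b \<longrightarrow> f a = f b" "a \<in> S" "b \<in> S"
  have "reach S a b" using a conn_def by auto
  then show ?thesis using a(2,3) by (induction rule: reach_induct) auto
qed


lemma listcol:
  assumes "finite S" "\<forall>v\<in>S. finite (L v) \<and> dg S v \<le> card (L v)"
    "\<forall>v\<in>S. \<exists>r. reach S v r \<and> dg S r < card (L r)"
  shows "\<exists>col. (\<forall>v\<in>S. col v \<in> L v) \<and> (\<forall>u\<in>S. \<forall>v\<in>S. E u v \<longrightarrow> col u \<noteq> col v)"
  using assms
proof (induction "card S" arbitrary: S rule: less_induct)
  case less
  show ?case
  proof (cases "S = {}")
    case True then show ?thesis by auto
  next
    case False
    then obtain v where v: "v \<in> S" by auto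
    then obtain r where r: "reach S v r" "dg S r < card (L r)" using less.prems by blast
    have rS: "r \<in> S" using reach_in[OF r(1) v] .
    let ?S' = "S - {r}"
    have c1: "card ?S' < card S" using card_Diff1_less[OF less.prems(1) rS] .
    have h1: "\<forall>u\<in>?S'. finite (L u) \<and> dg ?S' u \<le> card (L u)"
    proof
      fix u assume u: "u \<in> ?S'"
      have "dg ?S' u \<le> dg S u" using dg_mono[of S "?S'" u] less.prems(1) by simp
      moreover have "u \<in> S" using u by simp
      ultimately show "finite (L u) \<and> dg ?S' u \<le> card (L u)" using less.prems(2) le_trans by blast
    qed
    have h2: "\<forall>u\<in>?S'. \<exists>r'. reach ?S' u r' \<and> dg ?S' r' < card (L r')"
    proof
      fix u assume u: "u \<in> ?S'"
      obtain ru where ru: "reach S u ru" "dg S ru < card (L ru)" using less.prems(3) u by blast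
      from reach_avoid[OF ru(1) u] show "\<exists>r'. reach ?S' u r' \<and> dg ?S' r' < card (L r')"
      proof
        assume a: "reach ?S' u ru"
        have "dg ?S' ru \<le> dg S ru" using dg_mono less.prems(1) by blast
        then show ?thesis using a ru by (meson le_less_trans)
      next
        assume "\<exists>y\<in>?S'. E y r \<and> reach ?S' u y"
        then obtain y where y: "y \<in> ?S'" "E y r" "reach ?S' u y" by blast
        have rn: "r \<in> nb S y" using y rS by (simp add: nb_iff)
        have fn: "finite (nb S y)" using less.prems(1) nb_fin by simp
        have "card (nb S y - {r}) < card (nb S y)" using card_Diff1_less[OF fn rn] .
        then have "dg ?S' y < dg S y" unfolding dg_def nb_diff by simp
        moreover have "dg S y \<le> card (L y)" using less.prems(2) y by simp
        ultimately have "dg ?S' y < card (L y)" by simp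
        then show ?thesis using y by blast
      qed
    qed
    obtain col where col: "\<forall>v\<in>?S'. col v \<in> L v" "\<forall>u\<in>?S'. \<forall>v\<in>?S'. E u v \<longrightarrow> col u \<noteq> col v"
      using less.hyps[OF c1 _ h1 h2] less.prems(1) by blast
    have "L r - col ` nb S r \<noteq> {}"
    proof
      assume "L r - col ` nb S r = {}"
      then have "L r \<subseteq> col ` nb S r" by blast
      then have "card (L r) \<le> card (col ` nb S r)" using less.prems(1) nb_fin by (intro card_mono) auto
      also have "\<dots> \<le> dg S r" unfolding dg_def by (rule card_image_le) (use less.prems(1) nb_fin in auto)
      finally show False using r(2) by simp
    qed
    then obtain k where k: "k \<in> L r" "k \<notin> col ` nb S r" by blast
    let ?col = "col(r := k)"
    have p1: "\<forall>v\<in>S. ?col v \<in> L v" using col k by auto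
    have p2: "\<forall>u\<in>S. \<forall>v\<in>S. E u v \<longrightarrow> ?col u \<noteq> ?col v"
    proof (intro ballI impI)
      fix u w assume uw: "u \<in> S" "w \<in> S" "E u w"
      have "u \<noteq> w" using uw Eirr by auto
      show "?col u \<noteq> ?col w"
      proof (cases "u = r")
        case True
        then have "w \<in> nb S r" using uw by (simp add: nb_iff)
        then show ?thesis using True k \<open>u \<noteq> w\<close> by auto
      next
        case False
        show ?thesis
        proof (cases "w = r")
          case True
          then have "u \<in> nb S r" using uw Esym by (simp add: nb_iff)
          then show ?thesis using True k \<open>u \<noteq> w\<close> by auto
        next
          case False
          then show ?thesis using \<open>u \<noteq> r\<close> col uw by auto
        qed
      qed
    qed
    show ?thesis using p1 p2 by blast
  qed
qed


lemma color_bound: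
  assumes "finite S" "\<forall>v\<in>S. col v < D" "\<forall>u\<in>S. \<forall>v\<in>S. E u v \<longrightarrow> col u \<noteq> col v"
  shows "card S \<le> D * al S"
proof -
  have U: "S = (\<Union>i\<in>{..<D}. {v\<in>S. col v = i})" using assms(2) by auto
  have "card (\<Union>i\<in>{..<D}. {v\<in>S. col v = i}) = (\<Sum>i\<in>{..<D}. card {v\<in>S. col v = i})"
    by (rule card_UN_disjoint) (use assms(1) in auto)
  then have "card S = (\<Sum>i\<in>{..<D}. card {v\<in>S. col v = i})" unfolding U[symmetric] .
  also have "\<dots> \<le> (\<Sum>i\<in>{..<D}. al S)"
  proof (rule sum_mono)
    fix i assume "i \<in> {..<D}"
    have "independent_set S E {v\<in>S. col v = i}" using assms(3) unfolding independent_set_def by fastforce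
    then show "card {v\<in>S. col v = i} \<le> al S" using al_ge[OF assms(1)] by simp
  qed
  also have "\<dots> = D * al S" by simp
  finally show ?thesis .
qed

lemma brooks_col:
  assumes fS: "finite S" and reg: "\<forall>v\<in>S. dg S v = D" and xs: "x \<in> S" "u \<in> S" "w \<in> S"
    and e: "E x u" "E x w" "u \<noteq> w" "\<not> E u w" and cn: "conn (S - {u,w})"
  shows "card S \<le> D * al S"
proof -
  let ?S' = "S - {u,w}"
  define L where "L v = {0..<D} - (if E v u \<or> E v w then {0} else {})" for v
  have xS': "x \<in> ?S'" using xs e Eirr by auto
  have fS': "finite ?S'" using fS by simp
  have L1: "card (L v) = D - 1" if "E v u \<or> E v w" for v
  proof -
    have "L v = {0..<D} - {0}" unfolding L_def using that by simp
    moreover have "card ({0..<D} - {0::nat}) = D - 1" using D3 by (subst card_Diff_singleton) auto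
    ultimately show ?thesis by simp
  qed
  have L2: "card (L v) = D" if "\<not> (E v u \<or> E v w)" for v
    unfolding L_def using that by simp
  have L0: "0 \<notin> L v" if "E v u \<or> E v w" for v
    unfolding L_def using that by simp
  have Lf: "finite (L v)" for v unfolding L_def by simp
  have LD: "k \<in> L v \<Longrightarrow> k < D" for k v unfolding L_def by (cases "E v u \<or> E v w") auto
  have h1: "\<forall>v\<in>?S'. finite (L v) \<and> dg ?S' v \<le> card (L v)"
  proof
    fix v assume v: "v \<in> ?S'"
    have d: "dg ?S' v = card (nb S v - {u,w})" by (simp add: dg_def nb_diff)
    have fn: "finite (nb S v)" using fS nb_fin by simp
    have dD: "card (nb S v) = D" using reg v unfolding dg_def by simp
    show "finite (L v) \<and> dg ?S' v \<le> card (L v)"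
    proof (cases "E v u \<or> E v w")
      case True
      obtain t where t: "t \<in> {u,w}" "E v t" using True by blast
      have "t \<in> S" using t xs by blast
      then have "t \<in> nb S v" using t by (simp add: nb_iff)
      then have "nb S v - {u,w} \<subset> nb S v" using t by blast
      then have "card (nb S v - {u,w}) < card (nb S v)" using fn by (intro psubset_card_mono) auto
      then have "dg ?S' v \<le> D - 1" using d dD by simp
      then show ?thesis using L1[OF True] Lf by simp
    next
      case False
      then have "nb S v \<inter> {u,w} = {}" unfolding nb_iff by (simp add: nb_def)
      then have "nb S v - {u,w} = nb S v" by blast
      then have "dg ?S' v = D" using d dD by simp
      then show ?thesis using L2[OF False] Lf by simp
    qed
  qed
  have h2: "\<forall>v\<in>?S'. \<exists>r. reach ?S' v r \<and> dg ?S' r < card (L r)"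
  proof
    fix v assume v: "v \<in> ?S'"
    have "reach ?S' v x" using cn v xS' unfolding conn_def by simp
    moreover have "dg ?S' x < card (L x)"
    proof -
      have "dg ?S' x = card (nb S x - {u,w})" by (simp add: dg_def nb_diff)
      also have "\<dots> = card (nb S x) - card {u,w}"
      proof -
        have "{u,w} \<subseteq> nb S x" using e xs by (simp add: nb_iff)
        then show ?thesis using card_Diff_subset[of "{u,w}" "nb S x"] by simp
      qed
      also have "card {u,w} = 2" using e by simp
      also have "card (nb S x) = D" using reg xs unfolding dg_def by simp
      finally have "dg ?S' x = D - 2" .
      moreover have "card (L x) = D - 1" using L1 e by simp
      ultimately show ?thesis using D3 by simp
    qed
    ultimately show "\<exists>r. reach ?S' v r \<and> dg ?S' r < card (L r)" by blast
  qed
  obtain col where col: "\<forall>v\<in>?S'. col v \<in> L v" "\<forall>a\<in>?S'. \<forall>b\<in>?S'. E a b \<longrightarrow> col a \<noteq> col b"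
    using listcol[OF fS' h1 h2] by blast
  define col2 where "col2 v = (if v = u \<or> v = w then 0 else col v)" for v
  have c1: "\<forall>v\<in>S. col2 v < D"
  proof
    fix v assume v: "v \<in> S"
    show "col2 v < D"
    proof (cases "v = u \<or> v = w")
      case True then show ?thesis using D3 unfolding col2_def by simp
    next
      case False
      then have "col v \<in> L v" using col(1) v by simp
      then show ?thesis using LD False unfolding col2_def by simp
    qed
  qed
  have c2: "\<forall>a\<in>S. \<forall>b\<in>S. E a b \<longrightarrow> col2 a \<noteq> col2 b"
  proof (intro ballI impI)
    fix a b assume ab: "a \<in> S" "b \<in> S" "E a b"
    show "col2 a \<noteq> col2 b"
    proof (cases "a = u \<or> a = w")
      case True
      then have bS: "b \<in> ?S'" using ab e Eirr Esym by auto
      moreover have "E b u \<or> E b w" using True ab Esym by auto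
      ultimately have "col b \<noteq> 0" using col(1) L0 by metis
      then show ?thesis using True bS unfolding col2_def by auto
    next
      case False
      show ?thesis
      proof (cases "b = u \<or> b = w")
        case True
        then have "E a u \<or> E a w" using ab by auto
        moreover have aS: "a \<in> ?S'" using ab \<open>\<not> (a = u \<or> a = w)\<close> by auto
        ultimately have "col a \<noteq> 0" using col(1) L0 by metis
        then show ?thesis using True aS unfolding col2_def by auto
      next
        case False
        then show ?thesis using \<open>\<not> (a = u \<or> a = w)\<close> col ab unfolding col2_def by auto
      qed
    qed
  qed
  show ?thesis using color_bound[OF fS c1 c2] .
qed


lemma cliq_prop: "cliq S u \<Longrightarrow> t \<in> cn S u \<Longrightarrow> cn S t = cn S u \<and> cliq S t"
proof -
  assume a: "cliq S u" "t \<in> cn S u"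
  have ct: "cn S t = cn S u"
  proof (cases "t = u")
    case False
    then have "t \<in> nb S u" using a(2) by (simp add: cn_def)
    then show ?thesis using a(1) by (simp add: cliq_def)
  qed simp
  have "cliq S t" unfolding cliq_def
  proof
    fix z assume z: "z \<in> nb S t"
    then have zc: "z \<in> cn S u" using ct unfolding cn_def by blast
    have "cn S z = cn S u"
    proof (cases "z = u")
      case False
      then have "z \<in> nb S u" using zc by (simp add: cn_def)
      then show ?thesis using a(1) by (simp add: cliq_def)
    qed simp
    then show "cn S z = cn S t" using ct by simp
  qed
  then show ?thesis using ct by simp
qed

lemma cliq_deg: "finite S \<Longrightarrow> cliq S u \<Longrightarrow> t \<in> cn S u \<Longrightarrow> dg S t + 1 = card (cn S u)"
  using cliq_prop dg_cn by metis

lemma loc_nb: "T \<subseteq> S \<Longrightarrow> (\<forall>s\<in>T. \<forall>t\<in>S-T. \<not> E s t) \<Longrightarrow> v \<in> T \<Longrightarrow> nb S v = nb T v"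
  unfolding nb_def by blast

lemma loc_wt: "T \<subseteq> S \<Longrightarrow> (\<forall>s\<in>T. \<forall>t\<in>S-T. \<not> E s t) \<Longrightarrow> v \<in> T \<Longrightarrow> wt S v = wt T v"
proof -
  assume a: "T \<subseteq> S" "\<forall>s\<in>T. \<forall>t\<in>S-T. \<not> E s t" "v \<in> T"
  have nv: "nb S v = nb T v" using loc_nb a by blast
  have "cn S z = cn T z" if "z \<in> nb S v" for z
  proof -
    have "z \<in> T" using that nv nb_sub by blast
    then show ?thesis using loc_nb[OF a(1,2)] by (simp add: cn_def)
  qed
  then have "cliq S v = cliq T v" unfolding cliq_def using nv by (simp add: cn_def)
  then show ?thesis unfolding wt_def dg_def using nv by simp
qed

lemma wt_le_c: "finite S \<Longrightarrow> 1 \<le> dg S v \<Longrightarrow> dg S v \<le> D \<Longrightarrow> wt S v \<le> c (dg S v)"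
  unfolding wt_def using c_bounds[of "dg S v"] by auto

lemma dg0_cliq: "dg S v = 0 \<Longrightarrow> finite S \<Longrightarrow> cliq S v"
  unfolding cliq_def dg_def using nb_fin by auto

lemma wt_ge: "finite S \<Longrightarrow> dg S v \<le> D \<Longrightarrow> \<not> (cliq S v \<and> dg S v = D) \<Longrightarrow> 1 / real D \<le> wt S v"
proof -
  assume a: "finite S" "dg S v \<le> D" "\<not> (cliq S v \<and> dg S v = D)"
  show ?thesis
  proof (cases "cliq S v")
    case True
    then have "dg S v + 1 \<le> D" using a by auto
    then have "1 / real D \<le> 1 / real (dg S v + 1)" using D3
      by (intro divide_left_mono) auto
    then show ?thesis using True by (simp add: wt_def)
  next
    case False
    then have "1 \<le> dg S v" using dg0_cliq a by fastforce
    then show ?thesis using False c_ge a by (simp add: wt_def)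
  qed
qed

abbreviation good where "good S \<equiv> (\<Sum>v\<in>S. wt S v) \<le> real (al S)"

lemma case_disc:
  assumes fS: "finite S" and IH: "\<forall>T. T \<subset> S \<longrightarrow> good T" and sp: "sep S A"
  shows "good S"
proof -
  let ?B = "S - A"
  have A: "A \<subseteq> S" "A \<noteq> {}" "?B \<noteq> {}" "\<forall>s\<in>A. \<forall>t\<in>?B. \<not> E s t" using sp sep_def by auto
  have B2: "\<forall>s\<in>?B. \<forall>t\<in>S - ?B. \<not> E s t" using A(4) Esym by blast
  have "(\<Sum>v\<in>S. wt S v) = (\<Sum>v\<in>A. wt S v) + (\<Sum>v\<in>?B. wt S v)"
    using fS A(1) by (metis sum.subset_diff add.commute)
  also have "(\<Sum>v\<in>A. wt S v) = (\<Sum>v\<in>A. wt A v)"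
    using loc_wt[OF A(1) A(4)] by (intro sum.cong) auto
  also have "(\<Sum>v\<in>?B. wt S v) = (\<Sum>v\<in>?B. wt ?B v)"
    using loc_wt[of ?B S, OF _ B2] by (intro sum.cong) auto
  also have "(\<Sum>v\<in>A. wt A v) \<le> real (al A)" using IH A by blast
  also have "(\<Sum>v\<in>?B. wt ?B v) \<le> real (al ?B)" using IH A by blast
  also have "real (al A) + real (al ?B) \<le> real (al S)"
  proof -
    have "al A + al ?B \<le> al (A \<union> ?B)"
      using fS A by (intro al_union) (auto intro: finite_subset)
    moreover have "A \<union> ?B = S" using A by blast
    ultimately show ?thesis by simp
  qed
  finally show ?thesis by simp
qed

lemma case_clique:
  assumes fS: "finite S" and cS: "conn S" and v: "v \<in> S" "cliq S v"
  shows "good S"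
proof -
  have sub: "cn S v \<subseteq> S" using cn_sub v by blast
  have cl: "\<forall>s\<in>cn S v. \<forall>t\<in>S - cn S v. \<not> E s t"
  proof (intro ballI notI)
    fix s t assume st: "s \<in> cn S v" "t \<in> S - cn S v" "E s t"
    then have "t \<in> cn S s" by (simp add: cn_def nb_iff)
    then show False using cliq_prop[OF v(2) st(1)] st by simp
  qed
  have eq: "cn S v = S" using conn_closed[OF cS sub _ cl] by (auto simp: cn_def)
  have w: "wt S u = 1 / real (card S)" if u: "u \<in> S" for u
  proof -
    have "u \<in> cn S v" using eq u by simp
    then have "cliq S u" "dg S u + 1 = card S" using cliq_prop[OF v(2)] cliq_deg[OF fS v(2)] eq by auto
    then show ?thesis unfolding wt_def by simp
  qed
  have "(\<Sum>u\<in>S. wt S u) = real (card S) * (1 / real (card S))" using w by simp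
  also have "\<dots> = 1" using v fS by (subst mult.commute) (auto simp: card_gt_0_iff)
  also have "1 \<le> real (al S)" using al_pos[OF fS] v by auto
  finally show ?thesis .
qed


lemma sum_const_le: "finite A \<Longrightarrow> (\<forall>t\<in>A. f t \<le> (k::real)) \<Longrightarrow> sum f A \<le> real (card A) * k"
  using sum_mono[of A f "\<lambda>_. k"] by simp

lemma comp_bound:
  assumes fS: "finite S" and cS: "conn S" and nc: "\<forall>t\<in>S. \<not> cliq S t" and degs: "\<forall>t\<in>S. dg S t \<le> D"
    and sub: "S' \<subset> S" and u: "u \<in> S'" "cliq S' u"
  shows "(\<Sum>t\<in>cn S' u. wt S t) \<le> (\<Sum>t\<in>cn S' u. wt S' t)"
proof -
  let ?K = "cn S' u"
  have fS': "finite S'" using fS sub finite_subset by blast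
  have KS': "?K \<subseteq> S'" using cn_sub u by blast
  have KS: "?K \<subseteq> S" using KS' sub by blast
  have fK: "finite ?K" using fS' KS' finite_subset by blast
  have Kne: "?K \<noteq> {}" by (simp add: cn_def)
  have cK: "card ?K \<ge> 1" using fK Kne by (simp add: Suc_le_eq card_gt_0_iff)
  define j where "j = card ?K - 1"
  have dj: "\<forall>t\<in>?K. dg S' t = j" using cliq_deg[OF fS' u(2)] j_def by fastforce
  have rhs: "(\<Sum>t\<in>?K. wt S' t) = 1"
  proof -
    have "\<forall>t\<in>?K. wt S' t = 1 / real (card ?K)"
    proof
      fix t assume t: "t \<in> ?K"
      have "cliq S' t" using cliq_prop[OF u(2) t] by simp
      moreover have "dg S' t + 1 = card ?K" using cliq_deg[OF fS' u(2) t] .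
      ultimately show "wt S' t = 1 / real (card ?K)" unfolding wt_def by simp
    qed
    then have "(\<Sum>t\<in>?K. wt S' t) = real (card ?K) * (1 / real (card ?K))" by simp
    also have "\<dots> = 1" using cK by simp
    finally show ?thesis .
  qed
  have wS: "\<forall>t\<in>?K. wt S t = c (dg S t)" using nc KS unfolding wt_def by auto
  have geq: "\<forall>t\<in>?K. j \<le> dg S t" using dj dg_mono[OF fS] sub by (metis psubset_imp_subset)
  have "\<exists>z\<in>?K. j < dg S z"
  proof (rule ccontr)
    assume "\<not> ?thesis"
    then have eqd: "\<forall>t\<in>?K. dg S t = dg S' t" using geq dj by force
    have eqn: "\<forall>t\<in>?K. nb S t = nb S' t"
    proof
      fix t assume t: "t \<in> ?K"
      have "nb S' t \<subseteq> nb S t" using nb_mono sub by blast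
      moreover have "card (nb S' t) = card (nb S t)" using eqd t by (simp add: dg_def)
      ultimately show "nb S t = nb S' t" using card_subset_eq[OF nb_fin[OF fS]] by metis
    qed
    have cl: "\<forall>s\<in>?K. \<forall>t\<in>S - ?K. \<not> E s t"
    proof (intro ballI notI)
      fix s t assume st: "s \<in> ?K" "t \<in> S - ?K" "E s t"
      have "t \<in> nb S s" using st by (simp add: nb_iff)
      then have "t \<in> nb S' s" using eqn st by simp
      then have "t \<in> cn S' s" by (simp add: cn_def)
      then show False using cliq_prop[OF u(2) st(1)] st by simp
    qed
    have "?K = S" using conn_closed[OF cS KS Kne cl] .
    then show False using KS' sub by blast
  qed
  then obtain z where z: "z \<in> ?K" "j < dg S z" by blast
  have zD: "dg S z \<le> D" using degs z KS by blast
  show ?thesis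
  proof (cases "j = 0")
    case True
    then have "card ?K = 1" using j_def cK by simp
    then have "?K = {z}" using z by (metis card_1_singletonE singletonD)
    then have "(\<Sum>t\<in>?K. wt S t) = c (dg S z)" using wS z by simp
    also have "\<dots> \<le> c 1" using c_mono[of 1 "dg S z"] z zD True by simp
    also have "\<dots> \<le> 1" using c1 .
    finally show ?thesis using rhs by simp
  next
    case False
    have "(\<Sum>t\<in>?K. wt S t) = wt S z + (\<Sum>t\<in>?K - {z}. wt S t)"
      using fK z by (simp add: sum.remove)
    also have "wt S z \<le> c (j+1)" using wS z c_mono[of "j+1" "dg S z"] zD by simp
    also have "(\<Sum>t\<in>?K - {z}. wt S t) \<le> real (card (?K - {z})) * c j"
    proof (rule sum_const_le)
      show "finite (?K - {z})" using fK by simp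
      show "\<forall>t\<in>?K - {z}. wt S t \<le> c j"
      proof
        fix t assume t: "t \<in> ?K - {z}"
        have "dg S t \<le> D" using degs t KS by blast
        then show "wt S t \<le> c j" using wS t geq c_mono[of j "dg S t"] False by simp
      qed
    qed
    also have "card (?K - {z}) = j" using j_def z fK by simp
    also have "c (j+1) + real j * c j = 1"
    proof -
      have "j \<le> D - 1" using z zD by simp
      then show ?thesis using crec[of j] False by simp
    qed
    finally show ?thesis using rhs by simp
  qed
qed


lemma case_ii:
  assumes fS: "finite S" and degs: "\<forall>t\<in>S. dg S t \<le> D" and IH: "\<forall>T. T \<subset> S \<longrightarrow> good T"
    and cS: "conn S" and nc: "\<forall>t\<in>S. \<not> cliq S t"
    and v: "v \<in> S" "y \<in> S" "E v y" "dg S v < dg S y"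
    and mn: "\<forall>a b. a \<in> S \<longrightarrow> b \<in> S \<longrightarrow> E a b \<longrightarrow> dg S a < dg S b \<longrightarrow> dg S v \<le> dg S a"
  shows "good S"
proof -
  define d where "d = dg S v"
  have nbge: "\<forall>u\<in>nb S v. d \<le> dg S u"
  proof (rule ballI, rule ccontr)
    fix u assume u: "u \<in> nb S v" "\<not> d \<le> dg S u"
    then have "u \<in> S" "E u v" using Esym by (auto simp: nb_iff)
    then show False using mn v(1) u(2) d_def by fastforce
  qed
  have yn: "y \<in> nb S v" using v by (simp add: nb_iff)
  have fn: "finite (nb S v)" using fS nb_fin by simp
  have d1: "1 \<le> d" unfolding d_def dg_def using yn fn
    by (metis One_nat_def Suc_leI card_gt_0_iff empty_iff)
  have dD: "d + 1 \<le> D" using v degs d_def by fastforce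
  let ?S' = "S - cn S v"
  have psub: "?S' \<subset> S" using v by (auto simp: cn_def)
  have fS': "finite ?S'" using fS by simp
  have wS: "\<forall>t\<in>S. wt S t = c (dg S t)" using nc unfolding wt_def by auto
  have cnS: "cn S v \<subseteq> S" using cn_sub v by blast
  have p1: "(\<Sum>t\<in>cn S v. wt S t) \<le> 1"
  proof -
    have "(\<Sum>t\<in>cn S v. wt S t) = wt S v + (\<Sum>t\<in>nb S v. wt S t)"
      unfolding cn_def using fn nb_irr by simp
    also have "(\<Sum>t\<in>nb S v. wt S t) = wt S y + (\<Sum>t\<in>nb S v - {y}. wt S t)"
      using fn yn by (simp add: sum.remove)
    also have "wt S v = c d" using wS v d_def by simp
    also have "wt S y \<le> c (d+1)"
      using wS v c_mono[of "d+1" "dg S y"] degs d_def by simp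
    also have "(\<Sum>t\<in>nb S v - {y}. wt S t) \<le> real (card (nb S v - {y})) * c d"
    proof (rule sum_const_le)
      show "finite (nb S v - {y})" using fn by simp
      show "\<forall>t\<in>nb S v - {y}. wt S t \<le> c d"
      proof
        fix t assume t: "t \<in> nb S v - {y}"
        then have tS: "t \<in> S" using nb_sub by blast
        then show "wt S t \<le> c d" using wS nbge t c_mono[of d "dg S t"] d1 degs by simp
      qed
    qed
    also have "card (nb S v - {y}) = d - 1" using fn yn d_def by (simp add: dg_def)
    also have "c d + (c (d + 1) + real (d - 1) * c d) = real d * c d + c (d+1)"
      using d1 by (simp add: algebra_simps of_nat_diff)
    also have "\<dots> = 1" using crec[of d] d1 dD by simp
    finally show ?thesis by simp
  qed
  let ?Q = "{u\<in>?S'. cliq ?S' u}"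
  let ?R = "?S' - ?Q"
  have p2: "(\<Sum>t\<in>?S'. wt S t) \<le> (\<Sum>t\<in>?S'. wt ?S' t)"
  proof -
    have split: "(\<Sum>t\<in>?S'. f t) = (\<Sum>t\<in>?Q. f t) + (\<Sum>t\<in>?R. f t)" for f :: "'a \<Rightarrow> real"
      using fS' by (metis (no_types, lifting) mem_Collect_eq subsetI sum.subset_diff add.commute)
    have r: "(\<Sum>t\<in>?R. wt S t) \<le> (\<Sum>t\<in>?R. wt ?S' t)"
    proof (rule sum_mono)
      fix t assume t: "t \<in> ?R"
      then have nq: "\<not> cliq ?S' t" by blast
      have g1: "1 \<le> dg ?S' t"
      proof (rule ccontr)
        assume "\<not> 1 \<le> dg ?S' t"
        then have "dg ?S' t = 0" by simp
        then show False using dg0_cliq[OF _ fS'] nq by blast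
      qed
      have le: "dg ?S' t \<le> dg S t" using dg_mono[OF fS] by blast
      have tS: "t \<in> S" using t by simp
      have "wt S t = c (dg S t)" using wS tS by simp
      also have "\<dots> \<le> c (dg ?S' t)" using c_mono[OF g1 le] degs tS by simp
      also have "\<dots> = wt ?S' t" using nq unfolding wt_def by simp
      finally show "wt S t \<le> wt ?S' t" .
    qed
    let ?F = "cn ?S' ` ?Q"
    have UF: "\<Union>?F = ?Q"
    proof
      show "\<Union>?F \<subseteq> ?Q"
      proof
        fix t assume "t \<in> \<Union>?F"
        then obtain u where u: "u \<in> ?Q" "t \<in> cn ?S' u" by blast
        then have "t \<in> ?S'" using cn_sub[of u ?S'] by blast
        moreover have "cliq ?S' t" using cliq_prop u by blast
        ultimately show "t \<in> ?Q" by simp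
      qed
      show "?Q \<subseteq> \<Union>?F" by (auto simp: cn_def)
    qed
    have fQ: "finite ?Q" using fS' by (rule finite_subset[rotated]) blast
    have fF: "finite ?F" using fQ by (rule finite_imageI)
    have fK: "\<forall>K\<in>?F. finite K"
    proof
      fix K assume "K \<in> ?F"
      then obtain u where u: "u \<in> ?Q" "K = cn ?S' u" by blast
      then have "K \<subseteq> ?S'" using cn_sub[of u ?S'] by simp
      then show "finite K" using fS' finite_subset by blast
    qed
    have dj: "\<forall>K1\<in>?F. \<forall>K2\<in>?F. K1 \<noteq> K2 \<longrightarrow> K1 \<inter> K2 = {}"
    proof (intro ballI impI)
      fix K1 K2 assume k: "K1 \<in> ?F" "K2 \<in> ?F" "K1 \<noteq> K2"
      then obtain u1 u2 where u: "u1 \<in> ?Q" "K1 = cn ?S' u1" "u2 \<in> ?Q" "K2 = cn ?S' u2" by blast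
      show "K1 \<inter> K2 = {}"
      proof (rule ccontr)
        assume "K1 \<inter> K2 \<noteq> {}"
        then obtain t where "t \<in> K1" "t \<in> K2" by blast
        then have "cn ?S' t = K1" "cn ?S' t = K2" using cliq_prop u by auto
        then show False using k by simp
      qed
    qed
    have q: "(\<Sum>t\<in>?Q. wt S t) \<le> (\<Sum>t\<in>?Q. wt ?S' t)"
    proof -
      have "(\<Sum>t\<in>?Q. wt S t) = (\<Sum>K\<in>?F. \<Sum>t\<in>K. wt S t)"
        using sum.Union_disjoint[OF fK dj, of "wt S"] UF by simp
      also have "\<dots> \<le> (\<Sum>K\<in>?F. \<Sum>t\<in>K. wt ?S' t)"
      proof (rule sum_mono)
        fix K assume "K \<in> ?F"
        then obtain u where u: "u \<in> ?Q" "K = cn ?S' u" by blast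
        show "(\<Sum>t\<in>K. wt S t) \<le> (\<Sum>t\<in>K. wt ?S' t)"
          using comp_bound[OF fS cS nc degs psub] u by simp
      qed
      also have "\<dots> = (\<Sum>t\<in>?Q. wt ?S' t)"
        using sum.Union_disjoint[OF fK dj, of "wt ?S'"] UF by simp
      finally show ?thesis .
    qed
    show ?thesis using split[of "wt S"] split[of "wt ?S'"] q r by simp
  qed
  have "(\<Sum>t\<in>S. wt S t) = (\<Sum>t\<in>cn S v. wt S t) + (\<Sum>t\<in>?S'. wt S t)"
    using fS cnS by (metis sum.subset_diff add.commute)
  also have "\<dots> \<le> 1 + (\<Sum>t\<in>?S'. wt ?S' t)" using p1 p2 by simp
  also have "\<dots> \<le> 1 + real (al ?S')" using IH psub by simp
  also have "\<dots> \<le> real (al S)" using al_pick[OF fS v(1)] by simp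
  finally show ?thesis .
qed


lemma case_iii:
  assumes fS: "finite S" and IH: "\<forall>T. T \<subset> S \<longrightarrow> good T"
    and cS: "conn S" and nc: "\<forall>t\<in>S. \<not> cliq S t"
    and reg: "\<forall>t\<in>S. dg S t = d" and dD: "d < D" and v: "v \<in> S"
  shows "good S"
proof -
  have fn: "finite (nb S t)" for t using fS nb_fin by simp
  have d0: "d \<noteq> 0" using dg0_cliq[OF _ fS] nc reg v by metis
  have d2: "2 \<le> d"
  proof (rule ccontr)
    assume "\<not> 2 \<le> d"
    then have d1: "d = 1" using d0 by simp
    then have "card (nb S v) = 1" using reg v by (simp add: dg_def)
    then obtain z where z: "nb S v = {z}" by (meson card_1_singletonE)
    then have zS: "z \<in> S" "E v z" by (auto simp: nb_iff)
    then have "v \<in> nb S z" using v Esym by (simp add: nb_iff)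
    moreover have "card (nb S z) = 1" using reg zS d1 by (simp add: dg_def)
    ultimately have "nb S z = {v}" by (metis card_1_singletonE singletonD)
    then have "cn S z = cn S v" using z by (auto simp: cn_def)
    then have "cliq S v" using z by (simp add: cliq_def)
    then show False using nc v by simp
  qed
  let ?S' = "S - {v}"
  have fS': "finite ?S'" using fS by simp
  have psub: "?S' \<subset> S" using v by auto
  have nbS': "nb ?S' t = nb S t - {v}" for t by (simp add: nb_diff)
  have nc': "\<forall>u\<in>?S'. \<not> cliq ?S' u"
  proof (intro ballI notI)
    fix u assume u: "u \<in> ?S'" "cliq ?S' u"
    let ?K = "cn ?S' u"
    have KS': "?K \<subseteq> ?S'" using cn_sub[of u ?S'] u(1) by simp
    show False
    proof (cases "\<exists>z\<in>?K. E z v")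
      case False
      have cl: "\<forall>s\<in>?K. \<forall>t\<in>S - ?K. \<not> E s t"
      proof (intro ballI notI)
        fix s t assume st: "s \<in> ?K" "t \<in> S - ?K" "E s t"
        have "t \<noteq> v" using st False by blast
        then have "t \<in> nb ?S' s" using st by (simp add: nb_iff)
        then have "t \<in> cn ?S' s" by (simp add: cn_def)
        then show False using cliq_prop[OF u(2) st(1)] st by simp
      qed
      have "?K = S" using conn_closed[OF cS _ _ cl] KS' by (auto simp: cn_def)
      then show False using KS' v by blast
    next
      case True
      then obtain z where z: "z \<in> ?K" "E z v" by blast
      have zS: "z \<in> S" using z KS' by blast
      have vz: "v \<in> nb S z" using z v by (simp add: nb_iff)
      have dz: "dg ?S' z = d - 1" using reg zS vz fn by (simp add: dg_def nbS')
      have allE: "\<forall>t\<in>?K. E t v"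
      proof (rule ballI, rule ccontr)
        fix t assume t: "t \<in> ?K" "\<not> E t v"
        then have "v \<notin> nb S t" by (simp add: nb_iff)
        moreover have "t \<in> S" using t(1) KS' by blast
        ultimately have "dg ?S' t = d" using reg by (simp add: dg_def nbS')
        moreover have "dg ?S' t = dg ?S' z"
          using cliq_deg[OF fS' u(2) t(1)] cliq_deg[OF fS' u(2) z(1)] by simp
        ultimately show False using dz d2 by simp
      qed
      have Ksub: "?K \<subseteq> nb S v" using allE KS' Esym by (auto simp: nb_iff)
      have "card ?K = d" using cliq_deg[OF fS' u(2) z(1)] dz d2 by simp
      then have Keq: "?K = nb S v" using Ksub card_subset_eq[OF fn Ksub] reg v by (simp add: dg_def)
      have "cliq S v" unfolding cliq_def
      proof
        fix z' assume z': "z' \<in> nb S v"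
        then have z'K: "z' \<in> ?K" using Keq by simp
        have "v \<in> nb S z'" using z' v Esym by (simp add: nb_iff)
        then have "nb S z' = insert v (nb ?S' z')" using nbS' by blast
        then have "cn S z' = insert v (cn ?S' z')" by (auto simp: cn_def)
        also have "cn ?S' z' = ?K" using cliq_prop[OF u(2) z'K] by simp
        finally show "cn S z' = cn S v" using Keq by (auto simp: cn_def)
      qed
      then show False using nc v by simp
    qed
  qed
  have w': "\<forall>t\<in>?S'. wt ?S' t = (if t \<in> nb S v then c (d - 1) else c d)"
  proof
    fix t assume t: "t \<in> ?S'"
    show "wt ?S' t = (if t \<in> nb S v then c (d - 1) else c d)"
    proof (cases "t \<in> nb S v")
      case True
      then have "v \<in> nb S t" using v Esym by (auto simp: nb_iff)
      then have "dg ?S' t = d - 1" using reg t fn by (simp add: dg_def nbS')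
      then show ?thesis using nc' t True unfolding wt_def by simp
    next
      case False
      then have "v \<notin> nb S t" using v t Esym by (auto simp: nb_iff)
      then have "dg ?S' t = d" using reg t by (simp add: dg_def nbS')
      then show ?thesis using nc' t False unfolding wt_def by simp
    qed
  qed
  have nbS: "nb S v \<subseteq> ?S'" using nb_sub nb_irr by blast
  have cnv: "card (nb S v) = d" using reg v by (simp add: dg_def)
  have cS1: "card S = card ?S' + 1"
  proof -
    have "card S > 0" using fS v card_gt_0_iff by blast
    then show ?thesis using card_Diff_singleton[OF v] by simp
  qed
  have cge: "card ?S' \<ge> d" using cnv card_mono[OF fS' nbS] by simp
  have "(\<Sum>t\<in>?S'. wt ?S' t) = (\<Sum>t\<in>nb S v. wt ?S' t) + (\<Sum>t\<in>?S' - nb S v. wt ?S' t)"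
    using fS' nbS by (metis sum.subset_diff add.commute)
  also have "(\<Sum>t\<in>nb S v. wt ?S' t) = real d * c (d - 1)"
    using w' nbS cnv by (simp add: subset_iff)
  also have "(\<Sum>t\<in>?S' - nb S v. wt ?S' t) = real (card ?S' - d) * c d"
  proof -
    have "(\<Sum>t\<in>?S' - nb S v. wt ?S' t) = (\<Sum>t\<in>?S' - nb S v. c d)" using w' by (intro sum.cong) auto
    also have "card (?S' - nb S v) = card ?S' - d" using card_Diff_subset[OF nb_fin[OF fS] nbS] cnv by simp
    ultimately show ?thesis by simp
  qed
  finally have eq': "(\<Sum>t\<in>?S'. wt ?S' t) = real d * c (d - 1) + real (card ?S' - d) * c d" .
  have eqS: "(\<Sum>t\<in>S. wt S t) = real (card S) * c d" using nc reg unfolding wt_def by simp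
  have key: "real (d+1) * c d \<le> real d * c (d - 1)" using c_key[of d] d2 dD by simp
  have "(\<Sum>t\<in>S. wt S t) \<le> (\<Sum>t\<in>?S'. wt ?S' t)"
  proof -
    have "real (card S) * c d = real (d+1) * c d + real (card ?S' - d) * c d"
      using cS1 cge by (simp add: algebra_simps of_nat_diff)
    then show ?thesis using eqS eq' key by simp
  qed
  also have "\<dots> \<le> real (al ?S')" using IH psub by simp
  also have "\<dots> \<le> real (al S)" using al_mono[OF fS] by simp
  finally show ?thesis .
qed


lemma sub_bound:
  assumes fS: "finite S" and IH: "\<forall>T. T \<subset> S \<longrightarrow> good T" and nc: "\<forall>t\<in>S. \<not> cliq S t"
    and reg: "\<forall>t\<in>S. dg S t = D" and T: "T \<subset> S"
  shows "card T \<le> D * al T"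
proof -
  have TS: "T \<subseteq> S" using T by blast
  have fT: "finite T" using fS TS finite_subset by blast
  have "\<forall>t\<in>T. 1 / real D \<le> wt T t"
  proof
    fix t assume t: "t \<in> T"
    have tS: "t \<in> S" using t TS by blast
    have le: "dg T t \<le> D" using dg_mono[OF fS TS] reg tS by metis
    have "\<not> (cliq T t \<and> dg T t = D)"
    proof
      assume a: "cliq T t \<and> dg T t = D"
      have nbeq: "nb T z = nb S z" if "z \<in> T" "dg T z = D" for z
      proof -
        have "nb T z \<subseteq> nb S z" using nb_mono[OF TS] .
        moreover have "card (nb T z) = card (nb S z)" using that reg TS by (auto simp: dg_def)
        ultimately show ?thesis using card_subset_eq[OF nb_fin[OF fS]] by metis
      qed
      have "cliq S t" unfolding cliq_def
      proof
        fix z assume z: "z \<in> nb S t"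
        have ntt: "nb T t = nb S t" using nbeq t a by blast
        then have zT: "z \<in> nb T t" using z by simp
        then have zc: "z \<in> cn T t" by (simp add: cn_def)
        have "cn T z = cn T t" using cliq_prop[of T t z] a zc by blast
        moreover have "dg T z = D" using cliq_deg[OF fT, of t z] cliq_deg[OF fT, of t t] a zc
          by (simp add: cn_def)
        moreover have "z \<in> T" using zT nb_sub by blast
        ultimately show "cn S z = cn S t" using nbeq ntt by (simp add: cn_def)
      qed
      then show False using nc tS by simp
    qed
    then show "1 / real D \<le> wt T t" using wt_ge[OF fT le] by simp
  qed
  then have "real (card T) * (1 / real D) \<le> (\<Sum>t\<in>T. wt T t)"
    using sum_mono[of T "\<lambda>_. 1 / real D" "wt T"] by simp
  also have "\<dots> \<le> real (al T)" using IH T by simp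
  finally have "real (card T) \<le> real D * real (al T)" using D3 by (simp add: field_simps)
  then show ?thesis by (simp flip: of_nat_mult)
qed


lemma cut_vertex:
  assumes fS: "finite S" and sb: "\<forall>T. T \<subset> S \<longrightarrow> card T \<le> D * al T"
    and x: "x \<in> S" and sp: "sep (S - {x}) A"
  shows "card S \<le> D * al S"
proof -
  let ?B = "S - {x} - A"
  have A: "A \<subseteq> S - {x}" "A \<noteq> {}" "?B \<noteq> {}" "\<forall>s\<in>A. \<forall>t\<in>?B. \<not> E s t"
    using sp unfolding sep_def by auto
  have BA: "\<forall>s\<in>?B. \<forall>t\<in>A. \<not> E s t" using A(4) Esym by blast
  have fA: "finite A" using fS A(1) finite_subset by blast
  have fB: "finite ?B" using fS by simp
  have xA: "x \<notin> A" using A(1) by blast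
  have xB: "x \<notin> ?B" by blast
  have dis: "A \<inter> ?B = {}" by blast
  have cardS: "card S = card A + card ?B + 1"
  proof -
    have eq: "S = insert x (A \<union> ?B)" using A(1) x by blast
    have "card (insert x (A \<union> ?B)) = Suc (card (A \<union> ?B))"
      using fA fB xA by (intro card_insert_disjoint) auto
    then have "card S = Suc (card (A \<union> ?B))" using eq by metis
    also have "card (A \<union> ?B) = card A + card ?B" using fA fB dis by (rule card_Un_disjoint)
    finally show ?thesis by simp
  qed
  obtain b0 where b0: "b0 \<in> ?B" using A(3) by blast
  obtain a0 where a0: "a0 \<in> A" using A(2) by blast
  have "A \<subset> S" using A(1) x by blast
  then have cA: "card A \<le> D * al A" using sb by simp
  have "?B \<subset> S" using x by blast
  then have cB: "card ?B \<le> D * al ?B" using sb by simp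
  have cAi: "card A + 1 \<le> D * al (insert x A)"
  proof -
    have "insert x A \<subset> S" using A(1) x b0 by blast
    then have "card (insert x A) \<le> D * al (insert x A)" using sb by simp
    then show ?thesis using fA xA by simp
  qed
  have cBi: "card ?B + 1 \<le> D * al (insert x ?B)"
  proof -
    have "insert x ?B \<subset> S" using x a0 A(1) by blast
    then have "card (insert x ?B) \<le> D * al (insert x ?B)" using sb by simp
    then show ?thesis using fB by simp
  qed
  have iA: "al (insert x A) \<le> max (al A) (1 + al (A - nb A x))" using al_insert[OF fA xA] .
  have iB: "al (insert x ?B) \<le> max (al ?B) (1 + al (?B - nb ?B x))" using al_insert[OF fB xB] .
  have u1: "al A + al ?B \<le> al S"
  proof -
    have "al A + al ?B \<le> al (A \<union> ?B)" using al_union[OF fA fB dis] A(4) by simp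
    also have "\<dots> \<le> al S" by (rule al_mono[OF fS]) (use A(1) in blast)
    finally show ?thesis .
  qed
  have u2: "1 + al (A - nb A x) + al (?B - nb ?B x) \<le> al S"
  proof -
    have "al (A - nb A x) + al (?B - nb ?B x) \<le> al ((A - nb A x) \<union> (?B - nb ?B x))"
      using A(4) by (intro al_union) (use fA fB in auto)
    also have "\<dots> \<le> al (S - cn S x)"
    proof (rule al_mono)
      show "finite (S - cn S x)" using fS by simp
      show "(A - nb A x) \<union> (?B - nb ?B x) \<subseteq> S - cn S x"
        using A(1) unfolding cn_def nb_def by blast
    qed
    finally show ?thesis using al_pick[OF fS x] by simp
  qed
  have D1: "1 \<le> D" using D3 by simp
  show ?thesis
  proof (cases "al (insert x A) \<le> al A")
    case True
    then have "card A + 1 \<le> D * al A" using cAi by (meson le_trans mult_le_mono2)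
    then have "card S \<le> D * al A + D * al ?B" using cardS cB by simp
    also have "\<dots> = D * (al A + al ?B)" by (simp add: algebra_simps)
    also have "\<dots> \<le> D * al S" using u1 by simp
    finally show ?thesis .
  next
    case nA: False
    show ?thesis
    proof (cases "al (insert x ?B) \<le> al ?B")
      case True
      then have "card ?B + 1 \<le> D * al ?B" using cBi by (meson le_trans mult_le_mono2)
      then have "card S \<le> D * al A + D * al ?B" using cardS cA by simp
      also have "\<dots> = D * (al A + al ?B)" by (simp add: algebra_simps)
      also have "\<dots> \<le> D * al S" using u1 by simp
      finally show ?thesis .
    next
      case nB: False
      have a1: "al A \<le> al (A - nb A x)" using nA iA by simp
      have b1: "al ?B \<le> al (?B - nb ?B x)" using nB iB by simp
      have s: "1 + al A + al ?B \<le> al S" using u2 a1 b1 by simp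
      have "card S \<le> D + D * al A + D * al ?B" using cardS cA cB D1 by simp
      also have "\<dots> = D * (1 + al A + al ?B)" by (simp add: algebra_simps)
      also have "\<dots> \<le> D * al S" using s by (rule mult_le_mono2)
      finally show ?thesis .
    qed
  qed
qed


lemma p3:
  assumes v: "v \<in> S" "\<not> cliq S v"
  shows "\<exists>x u w. x \<in> S \<and> u \<in> S \<and> w \<in> S \<and> E x u \<and> E x w \<and> u \<noteq> w \<and> \<not> E u w"
proof -
  obtain z where z: "z \<in> nb S v" "cn S z \<noteq> cn S v" using v unfolding cliq_def by blast
  have zS: "z \<in> S" "E v z" using z(1) unfolding nb_def by auto
  have vz: "z \<noteq> v" using zS Eirr by auto
  show ?thesis
  proof (cases "\<exists>t. t \<in> cn S z \<and> t \<notin> cn S v")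
    case True
    then obtain t where t: "t \<in> cn S z" "t \<notin> cn S v" by blast
    have "t \<noteq> z" using t z(1) unfolding cn_def by auto
    then have tn: "t \<in> S" "E z t" using t(1) unfolding cn_def nb_def by auto
    have "t \<noteq> v" "\<not> E v t" using t tn(1) unfolding cn_def nb_def by auto
    then show ?thesis using zS tn v(1) Esym by blast
  next
    case False
    then obtain t where t: "t \<in> cn S v" "t \<notin> cn S z" using z(2) by blast
    have "v \<in> cn S z" using zS v(1) Esym unfolding cn_def nb_def by auto
    then have "t \<noteq> v" using t by auto
    then have tn: "t \<in> S" "E v t" using t(1) unfolding cn_def nb_def by auto
    have "t \<noteq> z" "\<not> E z t" using t tn(1) unfolding cn_def nb_def by auto
    then show ?thesis using zS tn v(1) by blast
  qed
qed

lemma triple2: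
  assumes fS: "finite S" and reg: "\<forall>t\<in>S. dg S t = D" and c2: "\<forall>z\<in>S. conn (S - {z})"
    and xy: "x \<in> S" "y \<in> S" "x \<noteq> y" and spA: "sep (S - {x,y}) A"
    and mn: "\<forall>a b Z. a \<in> S \<longrightarrow> b \<in> S \<longrightarrow> a \<noteq> b \<longrightarrow> sep (S - {a,b}) Z \<longrightarrow> card A \<le> card Z"
  shows "\<exists>u w. u \<in> S \<and> w \<in> S \<and> E x u \<and> E x w \<and> u \<noteq> w \<and> \<not> E u w \<and> conn (S - {u,w})"
proof -
  define B where "B = S - {x,y} - A"
  have A: "A \<subseteq> S - {x,y}" "A \<noteq> {}" "B \<noteq> {}" "\<forall>s\<in>A. \<forall>t\<in>B. \<not> E s t"
    using spA unfolding sep_def B_def by auto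
  have BA: "\<forall>s\<in>B. \<forall>t\<in>A. \<not> E s t" using A(4) Esym by blast
  have xA: "x \<notin> A" "y \<notin> A" "x \<notin> B" "y \<notin> B" using A(1) unfolding B_def by auto
  have AS: "A \<subseteq> S" "B \<subseteq> S" using A(1) unfolding B_def by auto
  have fA: "finite A" using fS AS finite_subset by blast
  have cover: "S = {x,y} \<union> A \<union> B" using A(1) xy unfolding B_def by blast
  have "\<exists>u\<in>A. E x u"
  proof (rule ccontr)
    assume nx: "\<not> ?thesis"
    have "sep (S - {y}) A" unfolding sep_def
    proof (intro conjI)
      show "A \<subseteq> S - {y}" using A(1) by blast
      show "A \<noteq> {}" using A(2) .
      show "S - {y} - A \<noteq> {}" using xy xA by blast
      show "\<forall>s\<in>A. \<forall>t\<in>S - {y} - A. \<not> E s t"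
      proof (intro ballI notI)
        fix s t assume st: "s \<in> A" "t \<in> S - {y} - A" "E s t"
        show False
        proof (cases "t = x")
          case True then show False using nx st Esym by blast
        next
          case False
          then have "t \<in> B" using st unfolding B_def by blast
          then show False using A(4) st by blast
        qed
      qed
    qed
    then show False using c2 xy conn_nsep by blast
  qed
  then obtain u where u: "u \<in> A" "E x u" by blast
  have "\<exists>w\<in>B. E x w"
  proof (rule ccontr)
    assume nx: "\<not> ?thesis"
    have "sep (S - {y}) B" unfolding sep_def
    proof (intro conjI)
      show "B \<subseteq> S - {y}" unfolding B_def by blast
      show "B \<noteq> {}" using A(3) .
      show "S - {y} - B \<noteq> {}" using xy xA by blast
      show "\<forall>s\<in>B. \<forall>t\<in>S - {y} - B. \<not> E s t"
      proof (intro ballI notI)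
        fix s t assume st: "s \<in> B" "t \<in> S - {y} - B" "E s t"
        show False
        proof (cases "t = x")
          case True then show False using nx st Esym by blast
        next
          case False
          then have "t \<in> A" using st unfolding B_def by blast
          then show False using BA st by blast
        qed
      qed
    qed
    then show False using c2 xy conn_nsep by blast
  qed
  then obtain w where w: "w \<in> B" "E x w" by blast
  have uw: "u \<noteq> w" "\<not> E u w" using u w A(4) unfolding B_def by auto
  have uS: "u \<in> S" and wS: "w \<in> S" using u w AS by auto
  let ?X = "S - {u,w}"
  have yX: "y \<in> ?X" and xX: "x \<in> ?X" using xy xA u w by auto
  have AuX: "A - {u} \<subseteq> ?X" using AS w xA unfolding B_def by blast
  have BwX: "B - {w} \<subseteq> ?X" using AS u A(4) unfolding B_def by blast
  have ux: "u \<noteq> x" "u \<noteq> y" using u xA by auto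
  have compA: "\<exists>t\<in>{t. reach (A - {u}) z t}. E t q"
    if z: "z \<in> A - {u}" and q: "q = x \<or> q = y" for z q
  proof (rule ccontr)
    assume nt: "\<not> ?thesis"
    let ?Z = "{t. reach (A - {u}) z t}"
    define ob where "ob = (if q = y then x else y)"
    have ob: "ob \<in> S" "ob \<noteq> u" "ob \<noteq> q" "q \<in> S" "q \<noteq> u" "ob \<notin> A" "q \<notin> A"
      using xy ux q xA unfolding ob_def by auto
    have Zsub: "?Z \<subseteq> A - {u}" using comp_sub[OF z] .
    have zZ: "z \<in> ?Z" using reach_refl by simp
    have "sep (S - {u, ob}) ?Z" unfolding sep_def
    proof (intro conjI)
      show "?Z \<subseteq> S - {u, ob}" using Zsub AS ob by auto
      show "?Z \<noteq> {}" using zZ by blast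
      have "q \<in> S - {u, ob} - ?Z" using ob Zsub by blast
      then show "S - {u, ob} - ?Z \<noteq> {}" by blast
      show "\<forall>s\<in>?Z. \<forall>t\<in>S - {u, ob} - ?Z. \<not> E s t"
      proof (intro ballI notI)
        fix s t assume st: "s \<in> ?Z" "t \<in> S - {u, ob} - ?Z" "E s t"
        have sA: "s \<in> A - {u}" using st Zsub by blast
        show False
        proof (cases "t \<in> A")
          case True
          then have "t \<in> A - {u}" using st by blast
          then have "t \<in> ?Z" using comp_closed[of ?Z "A - {u}" z s t] st z by blast
          then show False using st by blast
        next
          case False
          then have "t \<in> {x,y} \<union> B" using st cover by blast
          moreover have "t \<notin> B" using A(4) sA st by blast
          ultimately have "t \<in> {x,y}" by blast
          moreover have "t \<noteq> ob" using st by blast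
          ultimately have "t = q" using q unfolding ob_def by (auto split: if_splits)
          then show False using nt st by blast
        qed
      qed
    qed
    moreover have "u \<noteq> ob" using ob by simp
    ultimately have "card A \<le> card ?Z" using mn uS ob(1) by blast
    moreover have "?Z \<subset> A" using Zsub u by blast
    then have "card ?Z < card A" using fA by (rule psubset_card_mono[rotated])
    ultimately show False by simp
  qed
  have reachA: "reach ?X z y" if z: "z \<in> A - {u}" for z
  proof -
    obtain t where t: "t \<in> {t. reach (A - {u}) z t}" "E t y" using compA[OF z] by blast
    have r: "reach (A - {u}) z t" using t by simp
    have tA: "t \<in> A - {u}" using reach_in[OF r z] .
    have "reach ?X z t" using reach_mono[OF AuX r] .
    then show ?thesis using reach_step tA AuX yX t(2) by blast
  qed
  have reachx: "reach ?X x y"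
  proof (cases "A - {u} = {}")
    case True
    then have Au: "A = {u}" using u by blast
    have "nb S u \<subseteq> {x,y}"
    proof
      fix t assume t: "t \<in> nb S u"
      then have tS: "t \<in> S" "E u t" unfolding nb_def by auto
      have "t \<notin> A" using Au tS Eirr by auto
      moreover have "t \<notin> B" using A(4) u tS by blast
      ultimately show "t \<in> {x,y}" using tS cover by blast
    qed
    then have "card (nb S u) \<le> card {x,y}" by (intro card_mono) auto
    also have "\<dots> \<le> 2" by (simp add: card_insert_if)
    finally have "dg S u \<le> 2" by (simp add: dg_def)
    then show ?thesis using reg uS D3 by simp
  next
    case False
    then obtain z where z: "z \<in> A - {u}" by blast
    obtain t where t: "t \<in> {t. reach (A - {u}) z t}" "E t x" using compA[OF z] by blast
    have r: "reach (A - {u}) z t" using t by simp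
    have tA: "t \<in> A - {u}" using reach_in[OF r z] .
    have tX: "t \<in> ?X" using tA AuX by blast
    have "reach ?X x t" using reach_edge[OF xX tX] t(2) Esym by blast
    then show ?thesis using reachA[OF tA] reach_trans by blast
  qed
  have reachB: "reach ?X z y" if z: "z \<in> B - {w}" for z
  proof -
    let ?Z = "{t. reach (B - {w}) z t}"
    have Zsub: "?Z \<subseteq> B - {w}" using comp_sub[OF z] .
    show ?thesis
    proof (cases "\<exists>t\<in>?Z. E t x \<or> E t y")
      case True
      then obtain t where t: "t \<in> ?Z" "E t x \<or> E t y" by blast
      have r: "reach (B - {w}) z t" using t by simp
      have tB: "t \<in> B - {w}" using reach_in[OF r z] .
      have tX: "t \<in> ?X" using tB BwX by blast
      have rz: "reach ?X z t" using reach_mono[OF BwX r] .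
      show ?thesis
      proof (cases "E t y")
        case True
        then show ?thesis using reach_step[OF rz tX yX] by blast
      next
        case False
        then have "E t x" using t by blast
        then have "reach ?X z x" using reach_step[OF rz tX xX] by blast
        then show ?thesis using reachx reach_trans by blast
      qed
    next
      case False
      have "sep (S - {w}) ?Z" unfolding sep_def
      proof (intro conjI)
        show "?Z \<subseteq> S - {w}" using Zsub AS by blast
        show "?Z \<noteq> {}" using reach_refl[of "B - {w}" z] by blast
        have "x \<in> S - {w} - ?Z" using xy xA Zsub w by blast
        then show "S - {w} - ?Z \<noteq> {}" by blast
        show "\<forall>s\<in>?Z. \<forall>t\<in>S - {w} - ?Z. \<not> E s t"
        proof (intro ballI notI)
          fix s t assume st: "s \<in> ?Z" "t \<in> S - {w} - ?Z" "E s t"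
          have sB: "s \<in> B - {w}" using st Zsub by blast
          show False
          proof (cases "t \<in> B")
            case True
            then have "t \<in> B - {w}" using st by blast
            then have "t \<in> ?Z" using comp_closed[of ?Z "B - {w}" z s t] st z by blast
            then show False using st by blast
          next
            case nB: False
            have "t \<notin> A" using BA sB st by blast
            then have "t = x \<or> t = y" using st cover nB by blast
            then show False using False st by blast
          qed
        qed
      qed
      then show ?thesis using c2 wS conn_nsep by blast
    qed
  qed
  have "conn ?X"
  proof (rule conn_via[of _ y], rule ballI)
    fix z assume z: "z \<in> ?X"
    then have "z = x \<or> z = y \<or> z \<in> A - {u} \<or> z \<in> B - {w}" using cover by blast
    then show "reach ?X z y" using reachx reach_refl reachA reachB by blast
  qed
  then show ?thesis using uS wS u(2) w(2) uw by blast
qed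


lemma case_iv:
  assumes fS: "finite S" and IH: "\<forall>T. T \<subset> S \<longrightarrow> good T"
    and cS: "conn S" and nc: "\<forall>t\<in>S. \<not> cliq S t"
    and reg: "\<forall>t\<in>S. dg S t = D" and v: "v \<in> S"
  shows "good S"
proof -
  have sb: "\<forall>T. T \<subset> S \<longrightarrow> card T \<le> D * al T"
    using sub_bound[OF fS IH nc reg] by blast
  have main: "card S \<le> D * al S"
  proof (cases "\<exists>x\<in>S. \<not> conn (S - {x})")
    case True
    then obtain x where x: "x \<in> S" "\<not> conn (S - {x})" by blast
    then obtain A where "sep (S - {x}) A" using not_conn by blast
    then show ?thesis using cut_vertex[OF fS sb x(1)] by blast
  next
    case False
    then have c2: "\<forall>z\<in>S. conn (S - {z})" by blast
    show ?thesis
    proof (cases "\<exists>a\<in>S. \<exists>b\<in>S. a \<noteq> b \<and> \<not> conn (S - {a,b})")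
      case True
      define P where "P n \<longleftrightarrow> (\<exists>a b A. a \<in> S \<and> b \<in> S \<and> a \<noteq> b \<and> sep (S - {a,b}) A \<and> card A = n)" for n
      obtain a b where "a \<in> S" "b \<in> S" "a \<noteq> b" "\<not> conn (S - {a,b})" using True by blast
      moreover then obtain A where "sep (S - {a,b}) A" using not_conn by blast
      ultimately have "P (card A)" unfolding P_def by blast
      then obtain n where n: "P n" "\<forall>m<n. \<not> P m" using exists_least_iff[of P] by blast
      then obtain x y A where xyA: "x \<in> S" "y \<in> S" "x \<noteq> y" "sep (S - {x,y}) A" "card A = n"
        unfolding P_def by blast
      have mn: "\<forall>a b Z. a \<in> S \<longrightarrow> b \<in> S \<longrightarrow> a \<noteq> b \<longrightarrow> sep (S - {a,b}) Z \<longrightarrow> card A \<le> card Z"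
      proof (intro allI impI)
        fix a b Z assume "a \<in> S" "b \<in> S" "a \<noteq> b" "sep (S - {a,b}) Z"
        then have "P (card Z)" unfolding P_def by blast
        then show "card A \<le> card Z" using n(2) xyA(5) not_less by blast
      qed
      obtain u w where uw: "u \<in> S" "w \<in> S" "E x u" "E x w" "u \<noteq> w" "\<not> E u w" "conn (S - {u,w})"
        using triple2[OF fS reg c2 xyA(1-4) mn] by blast
      show ?thesis using brooks_col[OF fS reg xyA(1) uw(1,2) uw(3-7)] .
    next
      case False
      obtain x u w where xuw: "x \<in> S" "u \<in> S" "w \<in> S" "E x u" "E x w" "u \<noteq> w" "\<not> E u w"
        using p3[of v S] v nc by blast
      have "conn (S - {u,w})" using False xuw by blast
      then show ?thesis using brooks_col[OF fS reg xuw] by blast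
    qed
  qed
  have "(\<Sum>t\<in>S. wt S t) = real (card S) * (1 / real D)"
    using nc reg cD unfolding wt_def by simp
  also have "\<dots> \<le> real (al S)"
  proof -
    have "real (card S) \<le> real D * real (al S)" using main by (simp flip: of_nat_mult)
    then show ?thesis using D3 by (simp add: field_simps)
  qed
  finally show ?thesis .
qed


theorem main_bound:
  assumes "finite S" "\<forall>v\<in>S. dg S v \<le> D"
  shows "good S"
  using assms
proof (induction S rule: finite_psubset_induct)
  case (psubset S)
  have fS: "finite S" using psubset.hyps .
  have degs: "\<forall>v\<in>S. dg S v \<le> D" using psubset.prems .
  have IH: "\<forall>T. T \<subset> S \<longrightarrow> good T"
  proof (intro allI impI)
    fix T assume T: "T \<subset> S"
    have "\<forall>v\<in>T. dg T v \<le> D"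
    proof
      fix v assume "v \<in> T"
      then have "dg T v \<le> dg S v" "v \<in> S" using dg_mono[OF fS] T by auto
      then show "dg T v \<le> D" using degs by fastforce
    qed
    then show "good T" using psubset.IH T by blast
  qed
  show "good S"
  proof (cases "S = {}")
    case True then show ?thesis by simp
  next
    case Sne: False
    then obtain v0 where v0: "v0 \<in> S" by blast
    show ?thesis
    proof (cases "conn S")
      case False
      then obtain A where "sep S A" using not_conn by blast
      then show ?thesis using case_disc[OF fS IH] by blast
    next
      case cS: True
      show ?thesis
      proof (cases "\<exists>v\<in>S. cliq S v")
        case True
        then show ?thesis using case_clique[OF fS cS] by blast
      next
        case False
        then have nc: "\<forall>t\<in>S. \<not> cliq S t" by blast
        show ?thesis
        proof (cases "\<exists>a b. a \<in> S \<and> b \<in> S \<and> E a b \<and> dg S a < dg S b")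
          case True
          define Q where "Q n \<longleftrightarrow> (\<exists>a b. a \<in> S \<and> b \<in> S \<and> E a b \<and> dg S a < dg S b \<and> dg S a = n)" for n
          obtain a b where "a \<in> S \<and> b \<in> S \<and> E a b \<and> dg S a < dg S b" using True by blast
          then have "Q (dg S a)" unfolding Q_def by blast
          then obtain n where n: "Q n" "\<forall>m<n. \<not> Q m" using exists_least_iff[of Q] by blast
          then obtain v y where vy: "v \<in> S" "y \<in> S" "E v y" "dg S v < dg S y" "dg S v = n"
            unfolding Q_def by blast
          have mn: "\<forall>a b. a \<in> S \<longrightarrow> b \<in> S \<longrightarrow> E a b \<longrightarrow> dg S a < dg S b \<longrightarrow> dg S v \<le> dg S a"
          proof (intro allI impI)
            fix a b assume "a \<in> S" "b \<in> S" "E a b" "dg S a < dg S b"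
            then have "Q (dg S a)" unfolding Q_def by blast
            then show "dg S v \<le> dg S a" using n(2) vy(5) not_less by blast
          qed
          show ?thesis using case_ii[OF fS degs IH cS nc vy(1-4) mn] .
        next
          case False
          have eqe: "\<forall>a\<in>S. \<forall>b\<in>S. E a b \<longrightarrow> dg S a = dg S b"
          proof (intro ballI impI)
            fix a b assume ab: "a \<in> S" "b \<in> S" "E a b"
            then have "\<not> dg S a < dg S b" using False by blast
            moreover have "\<not> dg S b < dg S a" using False ab Esym by blast
            ultimately show "dg S a = dg S b" by simp
          qed
          define d where "d = dg S v0"
          have reg: "\<forall>t\<in>S. dg S t = d" using reg_conn[OF cS eqe] v0 d_def by blast
          have "d \<le> D" using degs v0 d_def by simp
          then show ?thesis
          proof (cases "d < D")
            case True
            show ?thesis using case_iii[OF fS IH cS nc reg True v0] .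
          next
            case False
            then have "d = D" using \<open>d \<le> D\<close> by simp
            then show ?thesis using case_iv[OF fS IH cS nc _ v0] reg by simp
          qed
        qed
      qed
    qed
  qed
qed


lemma clique_all: "conn S \<Longrightarrow> v \<in> S \<Longrightarrow> cliq S v \<Longrightarrow> cn S v = S"
proof -
  assume cS: "conn S" and v: "v \<in> S" "cliq S v"
  have sub: "cn S v \<subseteq> S" using cn_sub v by blast
  have cl: "\<forall>s\<in>cn S v. \<forall>t\<in>S - cn S v. \<not> E s t"
  proof (intro ballI notI)
    fix s t assume st: "s \<in> cn S v" "t \<in> S - cn S v" "E s t"
    then have "t \<in> cn S s" by (simp add: cn_def nb_iff)
    then show False using cliq_prop[OF v(2) st(1)] st by simp
  qed
  show "cn S v = S" using conn_closed[OF cS sub _ cl] by (auto simp: cn_def)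
qed

end

theorem theorem2:
  fixes \<Delta> :: nat and V :: "'a set" and E :: "'a \<Rightarrow> 'a \<Rightarrow> bool" and c :: "nat \<Rightarrow> real"
  assumes "\<Delta> \<ge> 3"
    and "in_G_Delta \<Delta> V E"
    and "c \<Delta> = 1 / real \<Delta>"
    and "\<And>i. 1 \<le> i \<Longrightarrow> i \<le> \<Delta> - 1 \<Longrightarrow> real i * c i + c (i + 1) = 1"
  shows "real (independence_number V E) \<ge> (\<Sum>i = 1..\<Delta>. c i * real (card (deg_class V E i)))"
proof -
  have sg: "simple_graph V E" and cg: "connected_graph V E" and md: "max_degree V E = \<Delta>"
    and nk: "\<not> is_complete_graph V E (\<Delta> + 1)"
    using assms(2) unfolding in_G_Delta_def by auto
  have fV: "finite V" and Ein: "\<And>u v. E u v \<Longrightarrow> u \<in> V \<and> v \<in> V"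
    and Es: "\<And>u v. E u v \<Longrightarrow> E v u" and Ei: "\<And>v. \<not> E v v"
    using sg unfolding simple_graph_def by auto
  interpret ctx E \<Delta> c
    by unfold_locales (use Es Ei assms(1,3,4) in auto)
  have degs: "\<forall>v\<in>V. dg V v \<le> \<Delta>"
  proof
    fix v assume v: "v \<in> V"
    have "dg V v \<le> Max (insert 0 (degree V E ` V))" using fV v by (intro Max_ge) auto
    then show "dg V v \<le> \<Delta>" using md unfolding max_degree_def by simp
  qed
  have cV: "conn V"
  proof -
    have "reach V a b" if "a \<in> V" "E\<^sup>*\<^sup>* a b" for a b
      using that(2,1)
    proof (induction rule: rtranclp_induct)
      case base show ?case by (rule reach_refl)
    next
      case (step y z)
      then show ?case using reach_step Ein by blast
    qed
    then show ?thesis using cg unfolding connected_graph_def conn_def by blast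
  qed
  have nc: "\<forall>v\<in>V. \<not> cliq V v"
  proof (intro ballI notI)
    fix v assume v: "v \<in> V" "cliq V v"
    have all: "\<forall>u\<in>V. cn V u = V \<and> dg V u + 1 = card V"
    proof
      fix u assume u: "u \<in> V"
      have "u \<in> cn V v" using clique_all[OF cV v] u by simp
      then show "cn V u = V \<and> dg V u + 1 = card V"
        using cliq_prop[OF v(2)] cliq_deg[OF fV v(2)] clique_all[OF cV v] by metis
    qed
    have "degree V E ` V = {card V - 1}" using all v(1) by force
    then have "max_degree V E = card V - 1" unfolding max_degree_def by simp
    then have cd: "card V = \<Delta> + 1" using md all v(1) by force
    have "\<forall>u\<in>V. \<forall>w\<in>V. u \<noteq> w \<longrightarrow> E u w"
    proof (intro ballI impI)
      fix u w assume uw: "u \<in> V" "w \<in> V" "u \<noteq> w"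
      then have "w \<in> cn V u" using all by blast
      then show "E u w" using uw(3) by (simp add: cn_def nb_iff)
    qed
    then show False using nk cd unfolding is_complete_graph_def by blast
  qed
  have good: "(\<Sum>v\<in>V. wt V v) \<le> real (independence_number V E)"
    using main_bound[OF fV degs] .
  have wc: "\<forall>v\<in>V. wt V v = c (dg V v)" using nc unfolding wt_def by simp
  have dr: "(\<lambda>v. dg V v) ` V \<subseteq> {1..\<Delta>}"
  proof
    fix k assume "k \<in> (\<lambda>v. dg V v) ` V"
    then obtain v where v: "v \<in> V" "k = dg V v" by blast
    have "dg V v \<noteq> 0" using dg0_cliq[OF _ fV] nc v(1) by blast
    then show "k \<in> {1..\<Delta>}" using degs v by auto
  qed
  have "(\<Sum>i = 1..\<Delta>. c i * real (card (deg_class V E i)))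
      = (\<Sum>i = 1..\<Delta>. (\<Sum>v\<in>{v. v \<in> V \<and> dg V v = i}. c (dg V v)))"
  proof (rule sum.cong)
    fix i assume "i \<in> {1..\<Delta>}"
    have "(\<Sum>v\<in>{v. v \<in> V \<and> dg V v = i}. c (dg V v)) = (\<Sum>v\<in>{v. v \<in> V \<and> dg V v = i}. c i)"
      by (rule sum.cong) auto
    also have "\<dots> = real (card {v. v \<in> V \<and> dg V v = i}) * c i" by simp
    finally show "c i * real (card (deg_class V E i)) = (\<Sum>v\<in>{v. v \<in> V \<and> dg V v = i}. c (dg V v))"
      unfolding deg_class_def by simp
  qed simp
  also have "\<dots> = (\<Sum>v\<in>V. c (dg V v))"
    using sum.group[OF fV _ dr, of "\<lambda>v. c (dg V v)"] by simp
  also have "\<dots> = (\<Sum>v\<in>V. wt V v)" using wc by simp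
  finally show ?thesis using good by simp
qed

end
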